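(* Fix integers $n\ge1$, $0\le l\le n-1$ and real $q>1$. For integers $D\ge2$ let $$I_{n,l}(q,D)=\int_{-1}^{1}(1-y)^{lq-1+\frac D2}(1+y)^{(l+1)q-1+(q-\frac12)D}\Big[\mathcal C^{(l+\frac{D-1}{2})}_{n-l-1}(y)\Big]^{2q}dy .$$ Then, as $D\to\infty$, $$I_{n,l}(q,D)=\Big(\frac{(2q-1)^{2q-1}}{q^{2q}}\Big)^{D/2}\Big(\frac{\Gamma(\frac D2+n-\frac32)}{\Gamma(\frac D2+l-\frac12)}\Big)^{2q}(D+2l-1)^{-1/2}\,Q_0(q,n,l)\,\big(1+o(1)\big),$$ and consequently $I_{n,l}(q,D)=\big(\frac{(2q-1)^{2q-1}}{q^{2q}}\big)^{D/2}D^{2q(n-l-1)-\frac12}\,4^{-q(n-l-1)}Q_0(q,n,l)\,(1+o(1))$, where $$Q_0(q,n,l)=\frac{\sqrt{2\pi}\,4^{q(n-l-1)}}{\Gamma(n-l)^{2q}}\,\frac{(2q-1)^{q(l+1)-\frac12}(q-1)^{2q(n-l-1)}}{q^{\,q(2n-1)-\frac12}}.$$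
   Context: $\mathcal C^{(\alpha)}_k$ denotes the Gegenbauer (ultraspherical) polynomial of degree $k$ and parameter $\alpha$, in the standard normalization (generating function $(1-2xt+t^2)^{-\alpha}=\sum_k\mathcal C^{(\alpha)}_k(x)t^k$). $(q-1)^0:=1$. *)

theory Defs
  imports "HOL-Analysis.Analysis"
begin

text \<open>Gegenbauer polynomial C_k^(alpha)(x), standard normalization: the coefficient of t^k
  in (1 - 2 x t + t^2) powr (-alpha), given by its explicit expansion.\<close>
definition gegenbauer :: "real \<Rightarrow> nat \<Rightarrow> real \<Rightarrow> real" where
  "gegenbauer \<alpha> k x =
     (\<Sum>j\<le>k div 2. (-1)^j * pochhammer \<alpha> (k - j) / (fact j * fact (k - 2*j)) * (2*x)^(k - 2*j))"

text \<open>The integral I_{n,l}(q,D); the 2q-th power of the Gegenbauer polynomial is read as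
  the 2q-th power of its absolute value.\<close>
definition I_nl :: "nat \<Rightarrow> nat \<Rightarrow> real \<Rightarrow> nat \<Rightarrow> real" where
  "I_nl n l q D = (LBINT y:{-1..1::real}.
      (1 - y) powr (real l * q - 1 + real D / 2)
    * (1 + y) powr ((real l + 1) * q - 1 + (q - 1/2) * real D)
    * \<bar>gegenbauer (real l + (real D - 1) / 2) (n - l - 1) y\<bar> powr (2*q))"

definition Q0 :: "real \<Rightarrow> nat \<Rightarrow> nat \<Rightarrow> real" where
  "Q0 q n l = sqrt (2*pi) * 4 powr (q * real (n - l - 1)) / (Gamma (real (n - l)) powr (2*q))
     * ((2*q - 1) powr (q * (real l + 1) - 1/2) * (q - 1) powr (2*q * real (n - l - 1)))
     / (q powr (q * (2 * real n - 1) - 1/2))"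

end

theory Submission
  imports Defs "HOL-Probability.Probability"
begin


lemma psi_taylor:
  fixes A B c z :: real
  assumes A: "A > 0" and B: "B > 0" and c: "-1 < c" "c < 1" and z: "-1 < z" "z < 1"
  shows "\<exists>t. -1 < t \<and> t < 1 \<and> \<bar>t - c\<bar> \<le> \<bar>z - c\<bar> \<and>
    A*ln(1-z)+B*ln(1+z) = A*ln(1-c)+B*ln(1+c) + (-A/(1-c)+B/(1+c))*(z-c)
      + (-A/(1-t)^2 - B/(1+t)^2)/2*(z-c)^2"
proof (cases "z = c")
  case True
  then show ?thesis using c by (intro exI[of _ c]) auto
next
  case False
  define diff where "diff = (\<lambda>m::nat. if m = 0 then (\<lambda>y. A*ln(1-y)+B*ln(1+y))
      else if m = 1 then (\<lambda>y. -A/(1-y)+B/(1+y)) else (\<lambda>y. -A/(1-y)^2 - B/(1+y)^2))"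
  have D: "\<forall>(m::nat) t. m < 2 \<and> min c z \<le> t \<and> t \<le> max c z \<longrightarrow> DERIV (diff m) t :> diff (Suc m) t"
  proof (intro allI impI)
    fix m :: nat and t assume h: "m < 2 \<and> min c z \<le> t \<and> t \<le> max c z"
    then have t: "-1 < t" "t < 1" using c z by auto
    show "DERIV (diff m) t :> diff (Suc m) t"
    proof (cases "m = 0")
      case True
      then show ?thesis unfolding diff_def using t
        by (auto intro!: derivative_eq_intros simp: field_simps)
    next
      case False
      then have "m = 1" using h by auto
      then show ?thesis unfolding diff_def using t
        by (auto intro!: derivative_eq_intros simp: field_simps power2_eq_square)
    qed
  qed
  from Taylor[of 2 diff "\<lambda>y. A*ln(1-y)+B*ln(1+y)" "min c z" "max c z" c z, OF _ _ D] False
  obtain t where t: "(if z < c then z < t \<and> t < c else c < t \<and> t < z)"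
    and eq: "A*ln(1-z)+B*ln(1+z) = (\<Sum>m<2. (diff m c / fact m) * (z - c)^m) + (diff 2 t / fact 2) * (z - c)^2"
    by (auto simp: diff_def)
  show ?thesis
    apply (rule exI[of _ t])
    using t c z eq by (auto simp: diff_def numeral_2_eq_2 split: if_splits)
qed



lemma ratio_exp:
  fixes A B yc z :: real
  assumes A: "A > 0" and B: "B > 0" and c: "-1 < yc" "yc < 1" and z: "-1 < z" "z < 1"
    and crit: "-A/(1-yc)+B/(1+yc) = 0"
  shows "\<exists>t. -1 < t \<and> t < 1 \<and> \<bar>t - yc\<bar> \<le> \<bar>z - yc\<bar> \<and>
    (1-z) powr A * (1+z) powr B / ((1-yc) powr A * (1+yc) powr B)
      = exp ((-A/(1-t)^2 - B/(1+t)^2)/2*(z-yc)^2)"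
proof -
  from psi_taylor[OF A B c z] obtain t where t: "-1 < t" "t < 1" "\<bar>t - yc\<bar> \<le> \<bar>z - yc\<bar>"
    and eq: "A*ln(1-z)+B*ln(1+z) = A*ln(1-yc)+B*ln(1+yc) + (-A/(1-yc)+B/(1+yc))*(z-yc)
      + (-A/(1-t)^2 - B/(1+t)^2)/2*(z-yc)^2" by blast
  have "(1-z) powr A * (1+z) powr B / ((1-yc) powr A * (1+yc) powr B)
      = exp ((A*ln(1-z)+B*ln(1+z)) - (A*ln(1-yc)+B*ln(1+yc)))"
    using c z by (simp add: powr_def exp_add exp_diff mult.commute)
  also have "\<dots> = exp ((-A/(1-t)^2 - B/(1+t)^2)/2*(z-yc)^2)"
    using eq crit by simp
  finally show ?thesis using t by blast
qed

lemma psi2_bound: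
  fixes A B t :: real
  assumes A: "A > 0" and B: "B > 0" and t: "-1 < t" "t < 1"
  shows "-A/(1-t)^2 - B/(1+t)^2 \<le> -(A+B)/4"
proof -
  have p1: "0 < (1-t)^2" "(1-t)^2 \<le> 4" using t power_mono[of "1-t" 2 2] by auto
  have p2: "0 < (1+t)^2" "(1+t)^2 \<le> 4" using t power_mono[of "1+t" 2 2] by auto
  have "A/4 \<le> A/(1-t)^2" using p1 A by (intro divide_left_mono) auto
  moreover have "B/4 \<le> B/(1+t)^2" using p2 B by (intro divide_left_mono) auto
  ultimately show ?thesis by simp
qed



lemma laplace_core:
  fixes A B :: "nat \<Rightarrow> real" and g :: "nat \<Rightarrow> real \<Rightarrow> real" and a G M :: real
  assumes Apos: "\<And>D. A D > 0" and Bpos: "\<And>D. B D > 0"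
    and lim_a: "(\<lambda>D. A D / (A D + B D)) \<longlonglongrightarrow> a" and a: "0 < a" "a < 1"
    and Ninf: "filterlim (\<lambda>D. A D + B D) at_top sequentially"
    and gmeas[measurable]: "\<And>D. g D \<in> borel_measurable borel"
    and gbound: "\<And>D y. -1 \<le> y \<Longrightarrow> y \<le> 1 \<Longrightarrow> \<bar>g D y\<bar> \<le> M"
    and glim: "\<And>z. z \<longlonglongrightarrow> 1 - 2*a \<Longrightarrow> (\<lambda>D. g D (z D)) \<longlonglongrightarrow> G"
  shows "(\<lambda>D. (LBINT y:{-1..1}. (1-y) powr A D * (1+y) powr B D * g D y) * sqrt (A D + B D)
      / ((1 - (B D - A D)/(A D + B D)) powr A D * (1 + (B D - A D)/(A D + B D)) powr B D))
     \<longlonglongrightarrow> G * sqrt (8*pi*a*(1-a))"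
proof -
  define N where "N D = A D + B D" for D
  define yc where "yc D = (B D - A D)/N D" for D
  define c where "c D = sqrt (N D)" for D
  define Mx where "Mx D = (1 - yc D) powr A D * (1 + yc D) powr B D" for D
  define f where "f D y = (1-y) powr A D * (1+y) powr B D * g D y" for D y
  define F where "F D s = indicator {-1..1::real} (yc D + s / c D) * f D (yc D + s / c D) / Mx D" for D s
  define y0 where "y0 = 1 - 2*a"
  define \<sigma> where "\<sigma> = sqrt (4*a*(1-a))"
  have Npos: "N D > 0" for D using Apos[of D] Bpos[of D] by (simp add: N_def)
  have cpos: "c D > 0" for D using Npos[of D] by (simp add: c_def)
  have c2: "(c D)^2 = N D" for D using Npos[of D] by (simp add: c_def)
  have ycm: "1 - yc D = 2 * A D / N D" for D using Npos[of D]
    by (simp add: yc_def N_def field_simps)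
  have ycp: "1 + yc D = 2 * B D / N D" for D using Npos[of D]
    by (simp add: yc_def N_def field_simps)
  have yc_in: "-1 < yc D \<and> yc D < 1" for D
  proof -
    have "2 * A D / N D > 0" "2 * B D / N D > 0" using Apos[of D] Bpos[of D] Npos[of D] by auto
    then show ?thesis using ycm[of D] ycp[of D] by linarith
  qed
  have Mpos: "Mx D > 0" for D using yc_in[of D] by (simp add: Mx_def)
  have sig: "\<sigma> > 0" using a by (simp add: \<sigma>_def mult_pos_pos)
  have step1: "(LBINT y:{-1..1}. f D y) * c D / Mx D = (\<integral>s. F D s \<partial>lborel)" for D
  proof -
    have "(LBINT y:{-1..1}. f D y) = (\<integral>y. indicator {-1..1::real} y * f D y \<partial>lborel)"
      by (simp add: set_lebesgue_integral_def)
    also have "\<dots> = \<bar>1 / c D\<bar> *\<^sub>R (\<integral>s. indicator {-1..1::real} (yc D + 1 / c D * s) * f D (yc D + 1 / c D * s) \<partial>lborel)"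
      using cpos[of D] by (intro lborel_integral_real_affine) auto
    also have "\<dots> = (\<integral>s. F D s \<partial>lborel) * Mx D / c D"
      using cpos[of D] Mpos[of D] by (simp add: F_def)
    finally show ?thesis using cpos[of D] Mpos[of D] by (simp add: field_simps)
  qed
  have crit: "-A D/(1-yc D)+B D/(1+yc D) = 0" for D
    using Apos[of D] Bpos[of D] Npos[of D] by (simp add: ycm ycp)
  have M0: "M \<ge> 0" using gbound[of 0 0] by simp
  have key: "\<exists>t. -1 < t \<and> t < 1 \<and> \<bar>t - yc D\<bar> \<le> \<bar>s\<bar> / c D \<and>
      F D s = exp ((-A D/(1-t)^2 - B D/(1+t)^2) / N D / 2 * s^2) * g D (yc D + s / c D)"
    if z: "-1 < yc D + s / c D" "yc D + s / c D < 1" for D s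
  proof -
    from ratio_exp[OF Apos Bpos yc_in[THEN conjunct1] yc_in[THEN conjunct2] z crit]
    obtain t where t: "-1 < t" "t < 1" "\<bar>t - yc D\<bar> \<le> \<bar>yc D + s / c D - yc D\<bar>"
      and eq: "(1-(yc D + s / c D)) powr A D * (1+(yc D + s / c D)) powr B D / Mx D
         = exp ((-A D/(1-t)^2 - B D/(1+t)^2)/2*(yc D + s / c D - yc D)^2)"
      unfolding Mx_def by blast
    have "(yc D + s / c D - yc D)^2 = s^2 / N D" using c2[of D] cpos[of D]
      by (simp add: power_divide)
    then have eq2: "(-A D/(1-t)^2 - B D/(1+t)^2)/2*(yc D + s / c D - yc D)^2
        = (-A D/(1-t)^2 - B D/(1+t)^2) / N D / 2 * s^2" by simp
    have "F D s = (1-(yc D + s / c D)) powr A D * (1+(yc D + s / c D)) powr B D / Mx D * g D (yc D + s / c D)"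
      using z by (simp add: F_def f_def)
    then show ?thesis using t eq eq2 cpos[of D] by (intro exI[of _ t]) (auto simp: abs_divide)
  qed
  have bound: "\<bar>F D s\<bar> \<le> M * exp (-(s^2)/8)" for D s
  proof (cases "-1 < yc D + s / c D \<and> yc D + s / c D < 1")
    case True
    then obtain t where t: "-1 < t" "t < 1"
      and eq: "F D s = exp ((-A D/(1-t)^2 - B D/(1+t)^2) / N D / 2 * s^2) * g D (yc D + s / c D)"
      using key[of D s] by blast
    have "(-A D/(1-t)^2 - B D/(1+t)^2) / N D \<le> -(A D + B D)/4 / N D"
      using psi2_bound[OF Apos Bpos t] Npos[of D] by (intro divide_right_mono) auto
    also have "\<dots> = -1/4" using Npos[of D] by (simp add: N_def field_simps)
    finally have X: "(-A D/(1-t)^2 - B D/(1+t)^2) / N D \<le> -1/4" .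
    have "(-A D/(1-t)^2 - B D/(1+t)^2) / N D / 2 * s^2 \<le> (-1/4) / 2 * s^2"
      by (intro mult_right_mono divide_right_mono X) auto
    then have "(-A D/(1-t)^2 - B D/(1+t)^2) / N D / 2 * s^2 \<le> -(s^2)/8" by simp
    then have e: "exp ((-A D/(1-t)^2 - B D/(1+t)^2) / N D / 2 * s^2) \<le> exp (-(s^2)/8)" by simp
    have "\<bar>F D s\<bar> = exp ((-A D/(1-t)^2 - B D/(1+t)^2) / N D / 2 * s^2) * \<bar>g D (yc D + s / c D)\<bar>"
      by (simp add: eq abs_mult)
    also have "\<dots> \<le> exp (-(s^2)/8) * M"
      using True gbound[of "yc D + s / c D" D] e M0 by (intro mult_mono) auto
    finally show ?thesis by (simp add: mult.commute)
  next
    case False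
    then have "F D s = 0"
    proof (cases "yc D + s / c D \<in> {-1..1}")
      case True
      with False have "yc D + s / c D = -1 \<or> yc D + s / c D = 1" by auto
      then show ?thesis
      proof
        assume h: "yc D + s / c D = -1"
        then have "1 + (yc D + s / c D) = 0" by simp
        then show ?thesis by (simp add: F_def f_def)
      next
        assume h: "yc D + s / c D = 1"
        then have "1 - (yc D + s / c D) = 0" by simp
        then show ?thesis by (simp add: F_def f_def)
      qed
    qed (simp add: F_def)
    then show ?thesis using M0 by simp
  qed
  have a1: "1 - a > 0" using a by simp
  have y0in: "-1 < y0" "y0 < 1" using a by (auto simp: y0_def)
  have lim_yc: "yc \<longlonglongrightarrow> y0"
  proof -
    have "yc D = 1 - 2 * (A D / (A D + B D))" for D using ycm[of D] by (simp add: N_def)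
    then have "yc = (\<lambda>D. 1 - 2 * (A D / (A D + B D)))" by auto
    moreover have "(\<lambda>D. 1 - 2 * (A D / (A D + B D))) \<longlonglongrightarrow> 1 - 2 * a"
      by (intro tendsto_intros lim_a)
    ultimately show ?thesis unfolding y0_def by simp
  qed
  have cinf: "filterlim c at_infinity sequentially"
    unfolding c_def N_def
    by (rule filterlim_at_top_imp_at_infinity[OF filterlim_compose[OF sqrt_at_top Ninf]])
  have lim_sc: "(\<lambda>D. s / c D) \<longlonglongrightarrow> 0" for s
    by (rule tendsto_divide_0[OF tendsto_const cinf])
  define Flim where "Flim s = G * exp (-(s^2)/(2*\<sigma>^2))" for s
  have ptw: "(\<lambda>D. F D s) \<longlonglongrightarrow> Flim s" for s
  proof -
    define z where "z D = yc D + s / c D" for D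
    have lim_z: "z \<longlonglongrightarrow> y0" unfolding z_def using tendsto_add[OF lim_yc lim_sc[of s]] by simp
    have ev_z: "eventually (\<lambda>D. -1 < z D \<and> z D < 1) sequentially"
      using order_tendstoD(1)[OF lim_z y0in(1)] order_tendstoD(2)[OF lim_z y0in(2)]
      by eventually_elim auto
    have "\<forall>D. \<exists>t. (-1 < z D \<and> z D < 1) \<longrightarrow> (-1 < t \<and> t < 1 \<and> \<bar>t - yc D\<bar> \<le> \<bar>s\<bar> / c D \<and>
      F D s = exp ((-A D/(1-t)^2 - B D/(1+t)^2) / N D / 2 * s^2) * g D (z D))"
      using key unfolding z_def by blast
    then obtain T where T: "\<And>D. (-1 < z D \<and> z D < 1) \<Longrightarrow> (-1 < T D \<and> T D < 1 \<and> \<bar>T D - yc D\<bar> \<le> \<bar>s\<bar> / c D \<and>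
      F D s = exp ((-A D/(1-T D)^2 - B D/(1+T D)^2) / N D / 2 * s^2) * g D (z D))"
      by metis
    have lim_T: "T \<longlonglongrightarrow> y0"
    proof -
      have "(\<lambda>D. T D - y0) \<longlonglongrightarrow> 0"
      proof (rule Lim_null_comparison)
        show "eventually (\<lambda>D. norm (T D - y0) \<le> \<bar>s\<bar> / c D + \<bar>yc D - y0\<bar>) sequentially"
          using ev_z by eventually_elim (use T in fastforce)
        show "(\<lambda>D. \<bar>s\<bar> / c D + \<bar>yc D - y0\<bar>) \<longlonglongrightarrow> 0"
          using tendsto_add[OF lim_sc[of "\<bar>s\<bar>"] tendsto_rabs_zero[OF LIM_zero[OF lim_yc]]] by simp
      qed
      then show ?thesis by (simp add: LIM_zero_iff)
    qed
    have eqF: "eventually (\<lambda>D. exp ((-(A D / (A D + B D))/(1-T D)^2 - (1 - A D / (A D + B D))/(1+T D)^2) / 2 * s^2) * g D (z D) = F D s) sequentially"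
      using ev_z
    proof eventually_elim
      case (elim D)
      have "(-A D/(1-T D)^2 - B D/(1+T D)^2) / N D = (-(A D / (A D + B D))/(1-T D)^2 - (1 - A D / (A D + B D))/(1+T D)^2)"
      proof -
        have "1 - A D / (A D + B D) = B D / (A D + B D)" using Npos[of D] by (simp add: N_def field_simps)
        moreover have "(-A D/u - B D/v)/n = -(A D/n)/u - (B D/n)/v" for u v n :: real
          by (simp add: diff_divide_distrib mult.commute)
        ultimately show ?thesis by (simp add: N_def)
      qed
      then show ?case using T[OF elim] by simp
    qed
    have ne: "1 - y0 \<noteq> 0" "1 + y0 \<noteq> 0" using y0in by auto
    have lim1: "(\<lambda>D. exp ((-(A D / (A D + B D))/(1-T D)^2 - (1 - A D / (A D + B D))/(1+T D)^2) / 2 * s^2) * g D (z D))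
        \<longlonglongrightarrow> exp ((-a/(1-y0)^2 - (1-a)/(1+y0)^2)/2 * s^2) * G"
      using ne by (intro tendsto_intros lim_a lim_T glim) (auto simp: y0_def[symmetric] lim_z)
    have "exp ((-a/(1-y0)^2 - (1-a)/(1+y0)^2)/2 * s^2) * G = Flim s"
    proof -
      have s2: "\<sigma>^2 = 4*a*(1-a)" using a by (simp add: \<sigma>_def)
      have e1: "1 - y0 = 2*a" "1 + y0 = 2*(1-a)" by (auto simp: y0_def)
      have gen: "x/(2*x)^2 = 1/(4*x)" if "x \<noteq> 0" for x :: real
        using that by (simp add: power2_eq_square)
      have e2: "a/(2*a)^2 = 1/(4*a)" using a gen[of a] by simp
      have e3: "(1-a)/(2*(1-a))^2 = 1/(4*(1-a))" using a gen[of "1-a"] by simp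
      have e4: "-1/(4*a) - 1/(4*(1-a)) = -1/(4*a*(1-a))" using a by (simp add: field_simps)
      have "(-a/(1-y0)^2 - (1-a)/(1+y0)^2)/2 * s^2 = -(s^2)/(2*\<sigma>^2)"
        unfolding e1 s2 using e2 e3 e4 by simp
      then show ?thesis by (simp add: Flim_def)
    qed
    with Lim_transform_eventually[OF lim1 eqF] show ?thesis by simp
  qed
  have nd: "normal_density 0 \<sigma> s = 1 / sqrt (2 * pi * \<sigma>^2) * exp (-(s^2)/(2*\<sigma>^2))" for s
    by (simp add: normal_density_def)
  have Flim_eq: "Flim = (\<lambda>s. (G * sqrt (2 * pi * \<sigma>^2)) * normal_density 0 \<sigma> s)"
    using sig by (auto simp: nd Flim_def fun_eq_iff)
  have intFlim: "(\<integral>s. Flim s \<partial>lborel) = G * sqrt (8*pi*a*(1-a))"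
  proof -
    have "(\<integral>s. Flim s \<partial>lborel) = G * sqrt (2 * pi * \<sigma>^2)"
      unfolding Flim_eq using integral_normal_density[OF sig, of 0] by simp
    moreover have "\<sigma>^2 = 4*a*(1-a)" using a by (simp add: \<sigma>_def)
    ultimately show ?thesis by (simp add: mult.assoc)
  qed
  have nd2: "normal_density 0 2 s = 1 / sqrt (8 * pi) * exp (-(s^2)/8)" for s
    by (simp add: normal_density_def)
  have w_eq: "(\<lambda>s. M * exp (-(s^2)/8)) = (\<lambda>s. (M * sqrt (8 * pi)) * normal_density 0 2 s)"
    by (auto simp: nd2 fun_eq_iff)
  have intw: "integrable lborel (\<lambda>s. M * exp (-(s^2)/8))"
    unfolding w_eq by (intro integrable_mult_right integrable_normal_density) simp
  have Fmeas: "F D \<in> borel_measurable lborel" for D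
    unfolding F_def f_def by measurable
  have Flmeas: "Flim \<in> borel_measurable lborel"
    unfolding Flim_def by measurable
  have "(\<lambda>D. \<integral>s. F D s \<partial>lborel) \<longlonglongrightarrow> (\<integral>s. Flim s \<partial>lborel)"
  proof (rule integral_dominated_convergence[OF Flmeas Fmeas intw])
    show "AE x in lborel. (\<lambda>i. F i x) \<longlonglongrightarrow> Flim x" by (intro AE_I2 ptw)
    show "AE x in lborel. norm (F i x) \<le> M * exp (-(x^2)/8)" for i
      by (intro AE_I2) (use bound in simp)
  qed
  then have "(\<lambda>D. (LBINT y:{-1..1}. f D y) * c D / Mx D) \<longlonglongrightarrow> G * sqrt (8*pi*a*(1-a))"
    by (simp add: step1 intFlim)
  then show ?thesis by (simp add: f_def c_def Mx_def yc_def N_def)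
qed



lemma pochhammer_ge_self:
  fixes x :: real
  assumes "x \<ge> 1" "j \<ge> 1"
  shows "pochhammer x j \<ge> x"
  using assms(2)
proof (induction j)
  case 0 then show ?case by simp
next
  case (Suc j)
  show ?case
  proof (cases "j = 0")
    case True then show ?thesis by simp
  next
    case False
    then have "pochhammer x j \<ge> x" using Suc by simp
    moreover have "x + of_nat j \<ge> 1" using assms(1) by simp
    ultimately have "pochhammer x j * (x + of_nat j) \<ge> x * 1"
      using assms(1) by (intro mult_mono) auto
    then show ?thesis by (simp add: pochhammer_Suc)
  qed
qed

lemma poch_ratio_lim:
  fixes \<alpha> :: "nat \<Rightarrow> real"
  assumes inf: "filterlim \<alpha> at_top sequentially" and j: "j \<le> k"
  shows "(\<lambda>D. pochhammer (\<alpha> D) (k-j) / pochhammer (\<alpha> D) k) \<longlonglongrightarrow> (if j = 0 then 1 else 0)"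
proof -
  have ev: "eventually (\<lambda>D. \<alpha> D \<ge> 1) sequentially"
    using inf by (simp add: filterlim_at_top)
  show ?thesis
  proof (cases "j = 0")
    case True
    have "eventually (\<lambda>D. 1 = pochhammer (\<alpha> D) (k-j) / pochhammer (\<alpha> D) k) sequentially"
      using ev
    proof eventually_elim
      case (elim D)
      have "pochhammer (\<alpha> D) k > 0" by (rule pochhammer_pos) (use elim in auto)
      then show ?case using True by simp
    qed
    then show ?thesis using True by (auto intro: Lim_transform_eventually)
  next
    case False
    have eq: "eventually (\<lambda>D. inverse (pochhammer (\<alpha> D + of_nat (k-j)) j) = pochhammer (\<alpha> D) (k-j) / pochhammer (\<alpha> D) k) sequentially"
      using ev
    proof eventually_elim
      case (elim D)
      have "pochhammer (\<alpha> D) k = pochhammer (\<alpha> D) (k-j) * pochhammer (\<alpha> D + of_nat (k-j)) (k - (k-j))"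
        using j by (intro pochhammer_product) auto
      moreover have "pochhammer (\<alpha> D) (k-j) > 0" using elim by (intro pochhammer_pos) auto
      ultimately show ?case using j by (simp add: field_simps)
    qed
    have "filterlim (\<lambda>D. pochhammer (\<alpha> D + of_nat (k-j)) j) at_top sequentially"
    proof (rule filterlim_at_top_mono[OF inf])
      show "eventually (\<lambda>D. \<alpha> D \<le> pochhammer (\<alpha> D + of_nat (k-j)) j) sequentially"
        using ev
      proof eventually_elim
        case (elim D)
        then have "pochhammer (\<alpha> D + of_nat (k-j)) j \<ge> \<alpha> D + of_nat (k-j)"
          using False by (intro pochhammer_ge_self) auto
        then show ?case by simp
      qed
    qed
    then have "(\<lambda>D. inverse (pochhammer (\<alpha> D + of_nat (k-j)) j)) \<longlonglongrightarrow> 0"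
      by (intro tendsto_inverse_0_at_top)
    then show ?thesis using False eq by (auto intro: Lim_transform_eventually)
  qed
qed

lemma geg_div_eq:
  "gegenbauer \<alpha> k y / pochhammer \<alpha> k =
    (\<Sum>j\<le>k div 2. ((-1)^j / (fact j * fact (k - 2*j))) * (pochhammer \<alpha> (k - j) / pochhammer \<alpha> k) * (2*y)^(k - 2*j))"
  unfolding gegenbauer_def sum_divide_distrib by (intro sum.cong) auto

lemma geg_lim:
  fixes \<alpha> z :: "nat \<Rightarrow> real"
  assumes inf: "filterlim \<alpha> at_top sequentially" and z: "z \<longlonglongrightarrow> z0"
  shows "(\<lambda>D. gegenbauer (\<alpha> D) k (z D) / pochhammer (\<alpha> D) k) \<longlonglongrightarrow> (2*z0)^k / fact k"
proof -
  have "(\<lambda>D. \<Sum>j\<le>k div 2. ((-1)^j / (fact j * fact (k - 2*j))) * (pochhammer (\<alpha> D) (k - j) / pochhammer (\<alpha> D) k) * (2*z D)^(k - 2*j))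
     \<longlonglongrightarrow> (\<Sum>j\<le>k div 2. ((-1)^j / (fact j * fact (k - 2*j))) * (if j = 0 then 1 else 0) * (2*z0)^(k - 2*j))"
    by (intro tendsto_sum tendsto_mult tendsto_const tendsto_power poch_ratio_lim[OF inf] z) auto
  moreover have "(\<Sum>j\<le>k div 2. ((-1)^j / (fact j * fact (k - 2*j))) * (if j = 0 then 1 else 0) * (2*z0)^(k - 2*j))
      = (2*z0)^k / fact k"
  proof -
    have gen: "(\<Sum>j\<le>m. c j * (if j = 0 then 1 else 0) * f j) = c 0 * f 0" for m and c f :: "nat \<Rightarrow> real"
      by (induction m) auto
    show ?thesis by (subst gen) simp
  qed
  ultimately show ?thesis by (simp add: geg_div_eq)
qed

lemma geg_bound:
  fixes \<alpha> :: "nat \<Rightarrow> real"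
  assumes inf: "filterlim \<alpha> at_top sequentially"
  shows "\<exists>M. \<forall>D y. \<bar>y\<bar> \<le> 1 \<longrightarrow> \<bar>gegenbauer (\<alpha> D) k y / pochhammer (\<alpha> D) k\<bar> \<le> M"
proof -
  define hc where "hc j D = ((-1)^j / (fact j * fact (k - 2*j))) * (pochhammer (\<alpha> D) (k - j) / pochhammer (\<alpha> D) k)" for j D
  have "\<forall>j. \<exists>K. j \<le> k \<longrightarrow> (\<forall>D. \<bar>hc j D\<bar> \<le> K)"
  proof (intro allI)
    fix j
    show "\<exists>K. j \<le> k \<longrightarrow> (\<forall>D. \<bar>hc j D\<bar> \<le> K)"
    proof (cases "j \<le> k")
      case True
      have "hc j \<longlonglongrightarrow> ((-1)^j / (fact j * fact (k - 2*j))) * (if j = 0 then 1 else 0)" unfolding hc_def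
        by (intro tendsto_mult tendsto_const poch_ratio_lim[OF inf True])
      then have "convergent (hc j)" by (rule convergentI)
      then have "Bseq (hc j)" by (rule convergent_imp_Bseq)
      then obtain K where "\<forall>D. norm (hc j D) \<le> K" by (auto simp: Bseq_def)
      then show ?thesis by auto
    qed auto
  qed
  then obtain Kf where Kf: "\<And>j D. j \<le> k \<Longrightarrow> \<bar>hc j D\<bar> \<le> Kf j" by metis
  show ?thesis
  proof (intro exI allI impI)
    fix D and y :: real assume y: "\<bar>y\<bar> \<le> 1"
    have "\<bar>gegenbauer (\<alpha> D) k y / pochhammer (\<alpha> D) k\<bar> = \<bar>\<Sum>j\<le>k div 2. hc j D * (2*y)^(k - 2*j)\<bar>"
      by (simp add: geg_div_eq hc_def)
    also have "\<dots> \<le> (\<Sum>j\<le>k div 2. \<bar>hc j D * (2*y)^(k - 2*j)\<bar>)" by (rule sum_abs)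
    also have "\<dots> \<le> (\<Sum>j\<le>k div 2. Kf j * 2^k)"
    proof (intro sum_mono)
      fix j assume j: "j \<in> {..k div 2}"
      have "\<bar>2*y\<bar>^(k - 2*j) \<le> 2^(k-2*j)" using y by (intro power_mono) auto
      also have "\<dots> \<le> 2^k" by (intro power_increasing) auto
      finally have p: "\<bar>2*y\<bar>^(k - 2*j) \<le> 2^k" .
      have "\<bar>hc j D * (2*y)^(k - 2*j)\<bar> = \<bar>hc j D\<bar> * \<bar>2*y\<bar>^(k - 2*j)"
        by (simp add: abs_mult power_abs)
      also have "\<dots> \<le> Kf j * 2^k"
      proof -
        have jk: "j \<le> k" using j by auto
        have "\<bar>hc j D\<bar> \<le> Kf j" by (rule Kf[OF jk])
        then show ?thesis using p by (intro mult_mono) auto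
      qed
      finally show "\<bar>hc j D * (2*y)^(k - 2*j)\<bar> \<le> Kf j * 2^k" .
    qed
    finally show "\<bar>gegenbauer (\<alpha> D) k y / pochhammer (\<alpha> D) k\<bar> \<le> (\<Sum>j\<le>k div 2. Kf j * 2^k)" .
  qed
qed



lemma ln_lim:
  fixes X u :: "nat \<Rightarrow> real"
  assumes u: "u \<longlonglongrightarrow> 0" and Xu: "(\<lambda>D. X D * u D) \<longlonglongrightarrow> L"
  shows "(\<lambda>D. X D * ln (1 + u D)) \<longlonglongrightarrow> L"
proof -
  have "(\<lambda>D. X D * (ln (1 + u D) - u D)) \<longlonglongrightarrow> 0"
  proof (rule Lim_null_comparison)
    have ev: "eventually (\<lambda>D. \<bar>u D\<bar> < 1/2) sequentially"
      using tendstoD[OF u, of "1/2"] by (simp add: dist_real_def)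
    show "eventually (\<lambda>D. norm (X D * (ln (1 + u D) - u D)) \<le> 2 * \<bar>X D * u D\<bar> * \<bar>u D\<bar>) sequentially"
      using ev
    proof eventually_elim
      case (elim D)
      have "\<bar>ln (1 + u D) - u D\<bar> \<le> 2 * (u D)^2"
        using elim by (intro abs_ln_one_plus_x_minus_x_bound) auto
      then have "\<bar>X D\<bar> * \<bar>ln (1 + u D) - u D\<bar> \<le> \<bar>X D\<bar> * (2 * (u D)^2)"
        by (intro mult_left_mono) auto
      moreover have "\<bar>X D\<bar> * (2 * (u D)^2) = 2 * \<bar>X D * u D\<bar> * \<bar>u D\<bar>"
      proof -
        have "(u D)^2 = \<bar>u D\<bar>^2" by simp
        then show ?thesis by (simp only: abs_mult power2_eq_square mult_ac)
      qed
      ultimately show ?case by (simp add: abs_mult)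
    qed
    have "(\<lambda>D. 2 * \<bar>X D * u D\<bar> * \<bar>u D\<bar>) \<longlonglongrightarrow> 2 * \<bar>L\<bar> * \<bar>0\<bar>"
      by (intro tendsto_intros Xu u)
    then show "(\<lambda>D. 2 * \<bar>X D * u D\<bar> * \<bar>u D\<bar>) \<longlonglongrightarrow> 0" by simp
  qed
  from tendsto_add[OF Xu this] show ?thesis by (simp add: algebra_simps)
qed

lemma const_identity:
  fixes n l :: nat and q :: real
  assumes n: "1 \<le> n" and l: "l \<le> n - 1" and q: "1 < q"
  shows "\<bar>(2*(1 - 2*(1/(2*q))))^(n-l-1) / fact (n-l-1)\<bar> powr (2*q) * sqrt (8*pi*(1/(2*q))*(1-1/(2*q)))
     * ((1/q) powr (real l * q - 1) * ((2*q-1)/q) powr ((real l + 1) * q - 1))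
     = sqrt q * Q0 q n l"
proof -
  define k where "k = n - l - 1"
  have rk: "real k = real n - real l - 1" using n l by (simp add: k_def)
  have nl: "n - l = Suc k" using n l by (simp add: k_def)
  have G: "Gamma (real (n - l)) = fact k" unfolding nl by (simp add: Gamma_fact)
  have e1: "2*(1 - 2*(1/(2*q))) = 2*(q-1)/q" using q by (simp add: field_simps)
  have e2: "8*pi*(1/(2*q))*(1-1/(2*q)) = 2*pi*(2*q-1)/q^2" using q by (simp add: field_simps power2_eq_square)
  have pos: "q > 0" "q - 1 > 0" "2*q-1 > 0" using q by auto
  have LHS: "\<bar>(2*(1 - 2*(1/(2*q))))^(n-l-1) / fact (n-l-1)\<bar> powr (2*q) * sqrt (8*pi*(1/(2*q))*(1-1/(2*q)))
     * ((1/q) powr (real l * q - 1) * ((2*q-1)/q) powr ((real l + 1) * q - 1)) > 0"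
    unfolding e1 e2 using pos by (auto simp: k_def)
  have RHS: "sqrt q * Q0 q n l > 0" using pos unfolding Q0_def G by auto
  have "ln (\<bar>(2*(1 - 2*(1/(2*q))))^(n-l-1) / fact (n-l-1)\<bar> powr (2*q) * sqrt (8*pi*(1/(2*q))*(1-1/(2*q)))
     * ((1/q) powr (real l * q - 1) * ((2*q-1)/q) powr ((real l + 1) * q - 1)))
     = ln (sqrt q * Q0 q n l)"

  proof -
    have h1: "ln (2*q-2) = ln 2 + ln (q-1)" using pos ln_mult[of 2 "q-1"] by (simp add: algebra_simps)
    have h2: "ln (4::real) = 2 * ln 2" using ln_realpow[of 2 2] by simp
    have rn: "real n = real k + real l + 1" using rk by simp
    show ?thesis using pos unfolding e1 e2 Q0_def G k_def[symmetric]
      apply (simp add: ln_mult ln_div ln_sqrt ln_realpow abs_mult)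
      apply (simp only: h1 h2 rn)
      apply (simp add: field_simps)
      done
  qed
  then show ?thesis using LHS RHS by simp
qed



lemma lin_ratio:
  fixes a1 b1 c d1 :: real
  assumes c: "c \<noteq> 0"
  shows "(\<lambda>D::nat. (a1 * real D + b1) / (c * real D + d1)) \<longlonglongrightarrow> a1 / c"
proof -
  have "(\<lambda>D::nat. (a1 + b1 * (1 / real D)) / (c + d1 * (1 / real D))) \<longlonglongrightarrow> (a1 + b1 * 0) / (c + d1 * 0)"
    using c by (intro tendsto_intros lim_1_over_n) auto
  moreover have "eventually (\<lambda>D::nat. (a1 + b1 * (1 / real D)) / (c + d1 * (1 / real D)) = (a1 * real D + b1) / (c * real D + d1)) sequentially"
    using eventually_gt_at_top[of "0::nat"]
  proof eventually_elim
    case (elim D)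
    then have D: "real D > 0" by simp
    have e1: "a1 + b1 * (1 / real D) = (a1 * real D + b1) / real D" and e2: "c + d1 * (1 / real D) = (c * real D + d1) / real D"
      using D by (simp_all add: field_simps)
    have gen: "(x / real D) / (y / real D) = x / y" for x y using D by (cases "y = 0") (auto simp: field_simps)
    show ?case unfolding e1 e2 gen ..
  qed
  ultimately show ?thesis by (auto intro: Lim_transform_eventually)
qed

lemma Mx_ident_abs:
  fixes u v r X Y Dr a0 b0 c :: real
  assumes u: "u > 0" and v: "v > 0" and r: "r > 0" and X: "X > 0" and Y: "Y > 0"
    and lr: "ln r = ln u + (2*c - 1) * ln v"
  shows "(u * X) powr (Dr/2 + a0) * (v * Y) powr ((c-1/2)*Dr + b0)
    = r powr (Dr/2) * (u powr a0 * v powr b0)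
      * exp ((Dr/2 + a0) * ln X + ((c-1/2)*Dr + b0) * ln Y)"
proof -
  have "ln ((u * X) powr (Dr/2 + a0) * (v * Y) powr ((c-1/2)*Dr + b0))
    = ln (r powr (Dr/2) * (u powr a0 * v powr b0) * exp ((Dr/2 + a0) * ln X + ((c-1/2)*Dr + b0) * ln Y))"
    using u v r X Y by (simp add: ln_mult lr algebra_simps add_divide_distrib)
  then show ?thesis using u v r X Y by simp
qed

lemma Mx_ident:
  fixes q X Y Dr a0 b0 :: real
  assumes q: "q > 1" and X: "X > 0" and Y: "Y > 0"
  shows "((1/q)*X) powr (Dr/2 + a0) * (((2*q-1)/q)*Y) powr ((q-1/2)*Dr + b0)
    = ((2*q - 1) powr (2*q - 1) / q powr (2*q)) powr (Dr/2) * ((1/q) powr a0 * ((2*q-1)/q) powr b0)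
      * exp ((Dr/2 + a0) * ln X + ((q-1/2)*Dr + b0) * ln Y)"
proof (rule Mx_ident_abs[OF _ _ _ X Y])
  have pos: "q > 0" "2*q-1 > 0" using q by auto
  show "1/q > 0" "(2*q-1)/q > 0" "(2*q - 1) powr (2*q - 1) / q powr (2*q) > 0" using pos by auto
  show "ln ((2*q - 1) powr (2*q - 1) / q powr (2*q)) = ln (1/q) + (2*q - 1) * ln ((2*q-1)/q)"
    using pos by (simp add: ln_div algebra_simps)
qed



lemma ratio_alg:
  fixes p j m r sn s Q :: real
  assumes "p \<noteq> 0" "m \<noteq> 0" "r \<noteq> 0" "sn \<noteq> 0" "s \<noteq> 0" "Q \<noteq> 0"
  shows "(p * j) / (r * p * (1/s) * Q) = (j * sn / m) * (m / r) * (s / sn) / Q"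
  using assms by (simp add: field_simps)

lemma powr_mhalf: "x > 0 \<Longrightarrow> x powr (-1/2) = 1 / sqrt x"
proof -
  assume x: "x > 0"
  have "x powr (-1/2) = x powr (-(1/2))" by simp
  also have "\<dots> = inverse (x powr (1/2))" by (rule powr_minus)
  also have "\<dots> = 1 / sqrt x" using powr_half_sqrt[of x] x by (simp add: inverse_eq_divide)
  finally show ?thesis .
qed

lemma T12_alg:
  fixes p x Dr q kk r Q :: real
  assumes p: "p > 0" and x: "x > 0" and Dr: "Dr > 0" and r: "r > 0" and Q: "Q > 0"
  shows "r * p powr (2*q) * x powr (-1/2) * Q / (r * Dr powr (2*q*kk - 1/2) * 4 powr (- q * kk) * Q)
       = (p / (Dr/2) powr kk) powr (2*q) * (x / Dr) powr (-1/2)"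
proof -
  have "ln (r * p powr (2*q) * x powr (-1/2) * Q / (r * Dr powr (2*q*kk - 1/2) * 4 powr (- q * kk) * Q))
       = ln ((p / (Dr/2) powr kk) powr (2*q) * (x / Dr) powr (-1/2))"
  proof -
    have h2: "ln (4::real) = 2 * ln 2" using ln_realpow[of 2 2] by simp
    show ?thesis using p x Dr r Q
      apply (simp add: ln_mult ln_div h2)
      apply (simp add: field_simps)
      done
  qed
  then show ?thesis using p x Dr r Q by simp
qed



theorem mainTheorem3:
  fixes n l :: nat and q :: real
  assumes "1 \<le> n" and "l \<le> n - 1" and "1 < q"
  shows "(\<lambda>D::nat. I_nl n l q D) \<sim>[at_top]
           (\<lambda>D::nat. (((2*q - 1) powr (2*q - 1) / q powr (2*q)) powr (real D / 2))
              * (Gamma (real D / 2 + real n - 3/2) / Gamma (real D / 2 + real l - 1/2)) powr (2*q)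
              * (real D + 2 * real l - 1) powr (-1/2) * Q0 q n l)
       \<and> (\<lambda>D::nat. I_nl n l q D) \<sim>[at_top]
           (\<lambda>D::nat. (((2*q - 1) powr (2*q - 1) / q powr (2*q)) powr (real D / 2))
              * real D powr (2*q * real (n - l - 1) - 1/2)
              * 4 powr (- q * real (n - l - 1)) * Q0 q n l)"
proof -
  note n = assms(1) and l = assms(2) and q = assms(3)
  define k where "k = n - l - 1"
  have rk: "real k = real n - real l - 1" using n l by (simp add: k_def)
  define a0 where "a0 = real l * q - 1"
  define b0 where "b0 = (real l + 1) * q - 1"
  define A where "A D = real l * q - 1 + real D / 2" for D :: nat
  define B where "B D = (real l + 1) * q - 1 + (q - 1/2) * real D" for D :: nat
  define al where "al D = real l + (real D - 1) / 2" for D :: nat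
  define P where "P D = pochhammer (al D) k" for D
  define g where "g D y = \<bar>gegenbauer (al D) k y / P D\<bar> powr (2*q)" for D y
  define J where "J D = (LBINT y:{-1..1}. (1-y) powr A D * (1+y) powr B D * g D y)" for D
  define Mx where "Mx D = (1 - (B D - A D)/(A D + B D)) powr A D * (1 + (B D - A D)/(A D + B D)) powr B D" for D
  define a where "a = 1/(2*q)"
  define G where "G = \<bar>(2*(1 - 2*a))^k / fact k\<bar> powr (2*q)"
  define \<rho> where "\<rho> = (2*q - 1) powr (2*q - 1) / q powr (2*q)"
  define K0 where "K0 = (1/q) powr a0 * ((2*q-1)/q) powr b0"
  have qpos: "q > 0" "2*q - 1 > 0" "q - 1 > 0" using q by auto
  have lq: "real l * q \<ge> 0" using qpos by simp
  have Apos: "A D > 0" if "D \<ge> 3" for D using that lq by (simp add: A_def)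
  have Bpos: "B D > 0" if "D \<ge> 3" for D
  proof -
    have "(real l + 1) * q \<ge> q" using qpos by simp
    moreover have "(q - 1/2) * real D \<ge> 0" using qpos by simp
    ultimately show ?thesis using q unfolding B_def by linarith
  qed
  have alpos: "al D > 0" if "D \<ge> 2" for D
  proof -
    have "real D \<ge> 2" using that by simp
    then show ?thesis unfolding al_def by (simp add: field_simps)
  qed
  have Ppos: "P D > 0" if "D \<ge> 2" for D unfolding P_def by (rule pochhammer_pos[OF alpos[OF that]])
  have ABlin: "A D + B D = q * real D + (a0 + b0)" for D by (simp add: A_def B_def a0_def b0_def algebra_simps)
  have lim_a_full: "(\<lambda>D. A D / (A D + B D)) \<longlonglongrightarrow> a"
  proof -
    have "(\<lambda>D::nat. ((1/2) * real D + a0) / (q * real D + (a0 + b0))) \<longlonglongrightarrow> (1/2) / q"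
      using qpos by (intro lin_ratio) auto
    moreover have "(\<lambda>D. A D / (A D + B D)) = (\<lambda>D::nat. ((1/2) * real D + a0) / (q * real D + (a0 + b0)))"
    proof
      fix D :: nat
      have "A D = (1/2) * real D + a0" by (simp add: A_def a0_def)
      moreover have "A D + B D = q * real D + (a0 + b0)" by (rule ABlin)
      ultimately show "A D / (A D + B D) = ((1/2) * real D + a0) / (q * real D + (a0 + b0))"
        by metis
    qed
    ultimately show ?thesis by (simp add: a_def)
  qed
  have Ninf_full: "filterlim (\<lambda>D. A D + B D) at_top sequentially"
  proof -
    have "filterlim (\<lambda>D::nat. (a0 + b0) + q * real D) at_top sequentially"
      by (rule filterlim_tendsto_add_at_top[OF tendsto_const],
        rule filterlim_tendsto_pos_mult_at_top[OF tendsto_const qpos(1) filterlim_real_sequentially])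
    then show ?thesis unfolding ABlin by (simp add: add.commute)
  qed
  have alinf: "filterlim al at_top sequentially"
  proof -
    have "al = (\<lambda>D. (real l - 1/2) + (1/2) * real D)" by (auto simp: al_def fun_eq_iff field_simps)
    moreover have "filterlim (\<lambda>D::nat. (real l - 1/2) + (1/2) * real D) at_top sequentially"
      by (rule filterlim_tendsto_add_at_top[OF tendsto_const],
        rule filterlim_tendsto_pos_mult_at_top[OF tendsto_const _ filterlim_real_sequentially]) auto
    ultimately show ?thesis by simp
  qed
  have alinf3: "filterlim (\<lambda>D. al (D+3)) at_top sequentially"
    by (rule filterlim_compose[OF alinf filterlim_add_const_nat_at_top])
  have a_bounds: "0 < a" "a < 1" using q by (auto simp: a_def)
  have y0pos: "1 - 2*a > 0" using q by (simp add: a_def field_simps)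
  obtain M0 where M0: "\<And>D y. \<bar>y\<bar> \<le> 1 \<Longrightarrow> \<bar>gegenbauer (al (D+3)) k y / pochhammer (al (D+3)) k\<bar> \<le> M0"
    using geg_bound[OF alinf3, of k] by blast
  have L1: "(\<lambda>D. J D * sqrt (A D + B D) / Mx D) \<longlonglongrightarrow> G * sqrt (8*pi*a*(1-a))"
  proof (rule LIMSEQ_offset[where k=3])
    show "(\<lambda>i. J (i+3) * sqrt (A (i+3) + B (i+3)) / Mx (i+3)) \<longlonglongrightarrow> G * sqrt (8*pi*a*(1-a))"
      unfolding J_def Mx_def
    proof (rule laplace_core[where A="\<lambda>i. A (i+3)" and B="\<lambda>i. B (i+3)" and g="\<lambda>i. g (i+3)" and M="M0 powr (2*q)"])
      show "A (D+3) > 0" for D by (rule Apos) simp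
      show "B (D+3) > 0" for D by (rule Bpos) simp
      show "(\<lambda>D. A (D+3) / (A (D+3) + B (D+3))) \<longlonglongrightarrow> a"
        by (rule LIMSEQ_ignore_initial_segment[OF lim_a_full])
      show "0 < a" "a < 1" by (fact a_bounds)+
      show "filterlim (\<lambda>D. A (D+3) + B (D+3)) at_top sequentially"
        by (rule filterlim_compose[OF Ninf_full filterlim_add_const_nat_at_top])
      show "g (D+3) \<in> borel_measurable borel" for D
        unfolding g_def gegenbauer_def by measurable
      show "\<bar>g (D+3) y\<bar> \<le> M0 powr (2*q)" if "-1 \<le> y" "y \<le> 1" for D y
      proof -
        have h: "\<bar>gegenbauer (al (D+3)) k y / P (D+3)\<bar> \<le> M0" using M0[of y D] that by (simp add: P_def)
        have "g (D+3) y \<le> M0 powr (2*q)" unfolding g_def using h qpos by (intro powr_mono2) auto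
        then show ?thesis by (simp add: g_def)
      qed
      show "(\<lambda>D. g (D+3) (z D)) \<longlonglongrightarrow> G" if z: "z \<longlonglongrightarrow> 1 - 2*a" for z
      proof -
        have "(\<lambda>D. \<bar>gegenbauer (al (D+3)) k (z D) / pochhammer (al (D+3)) k\<bar> powr (2*q))
           \<longlonglongrightarrow> \<bar>(2*(1 - 2*a))^k / fact k\<bar> powr (2*q)"
          using y0pos by (intro tendsto_powr tendsto_rabs geg_lim[OF alinf3 z] tendsto_const) auto
        then show ?thesis by (simp add: g_def P_def G_def)
      qed
    qed
  qed
  have Npos: "A D + B D > 0" if "D \<ge> 3" for D using Apos[OF that] Bpos[OF that] by simp
  have Aeq: "A D = real D / 2 + a0" for D by (simp add: A_def a0_def)
  have Beq: "B D = (q - 1/2) * real D + b0" for D by (simp add: B_def b0_def)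
  define d1 where "d1 = (2*q-1)*a0 - b0"
  define u1 where "u1 D = d1 / (A D + B D)" for D
  define u2 where "u2 D = -d1 / ((2*q-1) * (A D + B D))" for D
  have NA: "A D + B D + d1 = 2*q*A D" for D unfolding A_def B_def a0_def b0_def d1_def by (simp add: algebra_simps)
  have NB: "(2*q-1)*(A D + B D) - d1 = 2*q*B D" for D unfolding A_def B_def a0_def b0_def d1_def by (simp add: algebra_simps)
  have e1: "1 - (B D - A D)/(A D + B D) = (1/q) * (1 + u1 D)" and e1p: "1 + u1 D > 0"
    and e2: "1 + (B D - A D)/(A D + B D) = ((2*q-1)/q) * (1 + u2 D)" and e2p: "1 + u2 D > 0"
    if D: "D \<ge> 3" for D
  proof -
    have N: "A D + B D > 0" by (rule Npos[OF D])
    have "1 + u1 D = (A D + B D + d1) / (A D + B D)" unfolding u1_def using N by (simp add: field_simps)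
    then have "1 + u1 D = 2*q*A D / (A D + B D)" by (simp only: NA)
    moreover have "1 + u2 D = ((2*q-1)*(A D + B D) - d1) / ((2*q-1)*(A D + B D))"
    proof -
      have gen: "X \<noteq> 0 \<Longrightarrow> 1 + (-d)/X = (X - d)/X" for X d :: real by (simp add: field_simps)
      have "(2*q-1)*(A D + B D) \<noteq> 0" using N qpos by simp
      then show ?thesis unfolding u2_def by (rule gen)
    qed
    then have "1 + u2 D = 2*q*B D / ((2*q-1)*(A D + B D))" by (simp only: NB)
    ultimately have h1: "1 + u1 D = 2*q*A D / (A D + B D)" and h2: "1 + u2 D = 2*q*B D / ((2*q-1)*(A D + B D))"
      by auto
    have AB: "A D > 0" "B D > 0" using Apos[OF D] Bpos[OF D] by auto
    show "1 + u1 D > 0" unfolding h1 using N AB qpos by (intro divide_pos_pos mult_pos_pos) auto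
    show "1 + u2 D > 0" unfolding h2 using N AB qpos by (intro divide_pos_pos mult_pos_pos) auto
    have "1 - (B D - A D)/(A D + B D) = 2*A D/(A D + B D)" using N by (simp add: field_simps)
    also have "\<dots> = (1/q) * (2*q*A D / (A D + B D))" using qpos by simp
    finally show "1 - (B D - A D)/(A D + B D) = (1/q) * (1 + u1 D)" unfolding h1 .
    have "1 + (B D - A D)/(A D + B D) = 2*B D/(A D + B D)" using N by (simp add: field_simps)
    also have "\<dots> = ((2*q-1)/q) * (2*q*B D / ((2*q-1)*(A D + B D)))"
    proof -
      have gen: "c \<noteq> 0 \<Longrightarrow> r \<noteq> 0 \<Longrightarrow> X \<noteq> 0 \<Longrightarrow> 2*Y/X = (c/r) * (2*r*Y/(c*X))" for c r X Y :: real
        by (simp add: field_simps)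
      show ?thesis by (rule gen) (use qpos N in auto)
    qed
    finally show "1 + (B D - A D)/(A D + B D) = ((2*q-1)/q) * (1 + u2 D)" unfolding h2 .
  qed
  have Mx_eq: "Mx D = \<rho> powr (real D/2) * K0 * exp (A D * ln (1 + u1 D) + B D * ln (1 + u2 D))"
    if D: "D \<ge> 3" for D
    unfolding Mx_def e1[OF D] e2[OF D] \<rho>_def K0_def
    using Mx_ident[OF q e1p[OF D] e2p[OF D], of "real D" a0 b0] unfolding Aeq Beq by simp
  have Ninf': "filterlim (\<lambda>D. A D + B D) at_infinity sequentially"
    by (rule filterlim_at_top_imp_at_infinity[OF Ninf_full])
  have lim_u1: "u1 \<longlonglongrightarrow> 0" unfolding u1_def by (rule tendsto_divide_0[OF tendsto_const Ninf'])
  have lim_u2: "u2 \<longlonglongrightarrow> 0" unfolding u2_def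
    by (rule tendsto_divide_0[OF tendsto_const filterlim_at_top_imp_at_infinity],
        rule filterlim_tendsto_pos_mult_at_top[OF tendsto_const qpos(2) Ninf_full])
  have lim_Bfull: "(\<lambda>D. B D / (A D + B D)) \<longlonglongrightarrow> 1 - a"
  proof -
    have "eventually (\<lambda>D. 1 - A D / (A D + B D) = B D / (A D + B D)) sequentially"
      using eventually_ge_at_top[of 3]
    proof eventually_elim
      case (elim D) with Npos[OF elim] show ?case by (simp add: field_simps)
    qed
    moreover have "(\<lambda>D. 1 - A D / (A D + B D)) \<longlonglongrightarrow> 1 - a" by (intro tendsto_intros lim_a_full)
    ultimately show ?thesis by (auto intro: Lim_transform_eventually)
  qed
  have lim_E: "(\<lambda>D. A D * ln (1 + u1 D) + B D * ln (1 + u2 D)) \<longlonglongrightarrow> d1 * a + (-d1/(2*q-1)) * (1-a)"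
  proof (intro tendsto_add ln_lim lim_u1 lim_u2)
    have "(\<lambda>D. d1 * (A D / (A D + B D))) \<longlonglongrightarrow> d1 * a" by (intro tendsto_intros lim_a_full)
    then show "(\<lambda>D. A D * u1 D) \<longlonglongrightarrow> d1 * a" by (simp add: u1_def mult.commute)
    have "(\<lambda>D. (-d1/(2*q-1)) * (B D / (A D + B D))) \<longlonglongrightarrow> (-d1/(2*q-1)) * (1-a)" by (intro tendsto_intros lim_Bfull)
    then show "(\<lambda>D. B D * u2 D) \<longlonglongrightarrow> (-d1/(2*q-1)) * (1-a)" by (simp add: u2_def mult.commute)
  qed
  have E0: "d1 * a + (-d1/(2*q-1)) * (1-a) = 0" using qpos by (simp add: a_def field_simps)
  have rhopos: "\<rho> > 0" using qpos by (simp add: \<rho>_def)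
  have L2: "(\<lambda>D. Mx D / \<rho> powr (real D/2)) \<longlonglongrightarrow> K0"
  proof -
    have "(\<lambda>D. K0 * exp (A D * ln (1 + u1 D) + B D * ln (1 + u2 D))) \<longlonglongrightarrow> K0 * exp 0"
      using lim_E unfolding E0 by (intro tendsto_intros)
    moreover have "eventually (\<lambda>D. K0 * exp (A D * ln (1 + u1 D) + B D * ln (1 + u2 D)) = Mx D / \<rho> powr (real D/2)) sequentially"
      using eventually_ge_at_top[of 3]
      by eventually_elim (use rhopos in \<open>simp add: Mx_eq\<close>)
    ultimately show ?thesis by (auto intro: Lim_transform_eventually)
  qed
  have L3: "(\<lambda>D. sqrt (real D + 2 * real l - 1) / sqrt (A D + B D)) \<longlonglongrightarrow> 1 / sqrt q"
  proof -
    have "(\<lambda>D::nat. (1 * real D + (2 * real l - 1)) / (q * real D + (a0 + b0))) \<longlonglongrightarrow> 1 / q"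
      using qpos by (intro lin_ratio) auto
    then have "(\<lambda>D::nat. sqrt ((1 * real D + (2 * real l - 1)) / (q * real D + (a0 + b0)))) \<longlonglongrightarrow> sqrt (1 / q)"
      by (rule tendsto_real_sqrt)
    then show ?thesis by (simp add: ABlin real_sqrt_divide algebra_simps)
  qed
  have I_eq: "I_nl n l q D = P D powr (2*q) * J D" if D: "D \<ge> 2" for D
  proof -
    have PD: "P D > 0" by (rule Ppos[OF D])
    have "(\<lambda>y. (1 - y) powr (real l * q - 1 + real D / 2)
        * (1 + y) powr ((real l + 1) * q - 1 + (q - 1/2) * real D)
        * \<bar>gegenbauer (real l + (real D - 1) / 2) (n - l - 1) y\<bar> powr (2*q))
      = (\<lambda>y. P D powr (2*q) * ((1-y) powr A D * (1+y) powr B D * g D y))"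
    proof
      fix y
      have eq: "\<bar>gegenbauer (al D) k y\<bar> = P D * \<bar>gegenbauer (al D) k y / P D\<bar>"
        using PD by (simp add: abs_divide)
      have "\<bar>gegenbauer (al D) k y\<bar> powr (2*q) = (P D * \<bar>gegenbauer (al D) k y / P D\<bar>) powr (2*q)"
        by (rule arg_cong[of _ _ "\<lambda>x. x powr (2*q)", OF eq])
      also have "\<dots> = P D powr (2*q) * g D y"
        unfolding g_def using PD by (intro powr_mult)
      finally have "\<bar>gegenbauer (al D) k y\<bar> powr (2*q) = P D powr (2*q) * g D y" .
      then show "(1 - y) powr (real l * q - 1 + real D / 2)
        * (1 + y) powr ((real l + 1) * q - 1 + (q - 1/2) * real D)
        * \<bar>gegenbauer (real l + (real D - 1) / 2) (n - l - 1) y\<bar> powr (2*q)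
        = P D powr (2*q) * ((1-y) powr A D * (1+y) powr B D * g D y)"
        by (simp add: A_def B_def al_def k_def)
    qed
    then show ?thesis unfolding I_nl_def J_def by simp
  qed
  have Gam_eq: "Gamma (real D / 2 + real n - 3/2) / Gamma (real D / 2 + real l - 1/2) = P D" if D: "D \<ge> 2" for D
  proof -
    have al_nn: "al D \<notin> \<int>\<^sub>\<le>\<^sub>0" using alpos[OF D] by (auto elim!: nonpos_Ints_cases)
    have e1: "real D / 2 + real n - 3/2 = al D + of_nat k" using rk by (simp add: al_def field_simps)
    have e2: "real D / 2 + real l - 1/2 = al D" by (simp add: al_def field_simps)
    show ?thesis unfolding e1 e2 P_def using pochhammer_Gamma[OF al_nn, of k] by simp
  qed
  have Gk: "Gamma (real (n - l)) = fact k"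
  proof -
    have "n - l = Suc k" using n l by (simp add: k_def)
    then show ?thesis by (simp add: Gamma_fact)
  qed
  have Q0pos: "Q0 q n l > 0" using qpos unfolding Q0_def Gk by auto
  have K0pos: "K0 > 0" using qpos by (simp add: K0_def)
  have Mxpos: "Mx D > 0" if D: "D \<ge> 3" for D using rhopos K0pos by (simp add: Mx_eq[OF D])
  have xpos: "real D + 2 * real l - 1 > 0" if D: "D \<ge> 3" for D using D by simp
  define T1 where "T1 = (\<lambda>D::nat. (((2*q - 1) powr (2*q - 1) / q powr (2*q)) powr (real D / 2))
              * (Gamma (real D / 2 + real n - 3/2) / Gamma (real D / 2 + real l - 1/2)) powr (2*q)
              * (real D + 2 * real l - 1) powr (-1/2) * Q0 q n l)"
  define T2 where "T2 = (\<lambda>D::nat. (((2*q - 1) powr (2*q - 1) / q powr (2*q)) powr (real D / 2))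
              * real D powr (2*q * real (n - l - 1) - 1/2)
              * 4 powr (- q * real (n - l - 1)) * Q0 q n l)"
  have const: "G * sqrt (8*pi*a*(1-a)) * K0 = sqrt q * Q0 q n l"
    using const_identity[OF n l q] unfolding G_def a_def K0_def a0_def b0_def k_def by simp
  have R1: "(\<lambda>D. I_nl n l q D / T1 D) \<longlonglongrightarrow> 1"
  proof -
    have "(\<lambda>D. (J D * sqrt (A D + B D) / Mx D) * (Mx D / \<rho> powr (real D/2))
        * (sqrt (real D + 2 * real l - 1) / sqrt (A D + B D)) / Q0 q n l)
        \<longlonglongrightarrow> (G * sqrt (8*pi*a*(1-a))) * K0 * (1 / sqrt q) / Q0 q n l"
      by (intro tendsto_intros L1 L2 L3) (use Q0pos in auto)
    also have "(G * sqrt (8*pi*a*(1-a))) * K0 * (1 / sqrt q) / Q0 q n l = 1"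
      using const Q0pos qpos by simp
    finally have lim: "(\<lambda>D. (J D * sqrt (A D + B D) / Mx D) * (Mx D / \<rho> powr (real D/2))
        * (sqrt (real D + 2 * real l - 1) / sqrt (A D + B D)) / Q0 q n l) \<longlonglongrightarrow> 1" .
    have "eventually (\<lambda>D. (J D * sqrt (A D + B D) / Mx D) * (Mx D / \<rho> powr (real D/2))
        * (sqrt (real D + 2 * real l - 1) / sqrt (A D + B D)) / Q0 q n l = I_nl n l q D / T1 D) sequentially"
      using eventually_ge_at_top[of 3]
    proof eventually_elim
      case (elim D)
      have D2: "D \<ge> 2" using elim by simp
      have T1eq: "T1 D = \<rho> powr (real D / 2) * P D powr (2*q) * (1 / sqrt (real D + 2 * real l - 1)) * Q0 q n l"
        unfolding T1_def \<rho>_def[symmetric] Gam_eq[OF D2] powr_mhalf[OF xpos[OF elim]] ..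
      show ?case unfolding T1eq I_eq[OF D2]
        by (rule ratio_alg[symmetric]) (use Ppos[OF D2] Mxpos[OF elim] rhopos Npos[OF elim] xpos[OF elim] Q0pos in auto)
    qed
    then show ?thesis using lim by (auto intro: Lim_transform_eventually)
  qed
  have R2: "(\<lambda>D. T1 D / T2 D) \<longlonglongrightarrow> 1"
  proof -
    have lP: "(\<lambda>D. P D / (real D / 2) powr real k) \<longlonglongrightarrow> 1"
    proof -
      have "(\<lambda>D. \<Prod>i\<in>{0..<k}. ((1/2) * real D + (real l - 1/2 + real i)) / ((1/2) * real D + 0)) \<longlonglongrightarrow> (\<Prod>i\<in>{0..<k}. (1/2) / (1/2::real))"
        by (intro tendsto_prod lin_ratio) auto
      then have lim: "(\<lambda>D. \<Prod>i\<in>{0..<k}. ((1/2) * real D + (real l - 1/2 + real i)) / ((1/2) * real D + 0)) \<longlonglongrightarrow> 1"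
        by simp
      have "eventually (\<lambda>D. (\<Prod>i\<in>{0..<k}. ((1/2) * real D + (real l - 1/2 + real i)) / ((1/2) * real D + 0)) = P D / (real D / 2) powr real k) sequentially"
        using eventually_ge_at_top[of 1]
      proof eventually_elim
        case (elim D)
        have Dp: "real D / 2 > 0" using elim by simp
        have "P D / (real D / 2) powr real k = (\<Prod>i\<in>{0..<k}. al D + real i) / (\<Prod>i\<in>{0..<k}. real D / 2)"
          unfolding P_def pochhammer_prod powr_realpow[OF Dp] by simp
        also have "\<dots> = (\<Prod>i\<in>{0..<k}. (al D + real i) / (real D / 2))"
          by (rule prod_dividef[symmetric])
        also have "\<dots> = (\<Prod>i\<in>{0..<k}. ((1/2) * real D + (real l - 1/2 + real i)) / ((1/2) * real D + 0))"
          by (intro prod.cong) (auto simp: al_def field_simps)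
        finally show ?case ..
      qed
      with lim show ?thesis by (auto intro: Lim_transform_eventually)
    qed
    have lx: "(\<lambda>D::nat. (real D + 2 * real l - 1) / real D) \<longlonglongrightarrow> 1"
    proof -
      have "(\<lambda>D::nat. (1 * real D + (2 * real l - 1)) / (1 * real D + 0)) \<longlonglongrightarrow> 1 / 1"
        by (intro lin_ratio) auto
      then show ?thesis by (simp add: algebra_simps)
    qed
    have "(\<lambda>D. (P D / (real D / 2) powr real k) powr (2*q) * ((real D + 2 * real l - 1) / real D) powr (-1/2))
        \<longlonglongrightarrow> 1 powr (2*q) * 1 powr (-1/2)"
      by (intro tendsto_intros lP lx) auto
    then have lim: "(\<lambda>D. (P D / (real D / 2) powr real k) powr (2*q) * ((real D + 2 * real l - 1) / real D) powr (-1/2))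
        \<longlonglongrightarrow> 1" by simp
    have "eventually (\<lambda>D. (P D / (real D / 2) powr real k) powr (2*q) * ((real D + 2 * real l - 1) / real D) powr (-1/2)
        = T1 D / T2 D) sequentially"
      using eventually_ge_at_top[of 3]
    proof eventually_elim
      case (elim D)
      have D2: "D \<ge> 2" using elim by simp
      show ?case unfolding T1_def T2_def \<rho>_def[symmetric] Gam_eq[OF D2] k_def[symmetric]
        by (rule T12_alg[symmetric]) (use Ppos[OF D2] rhopos xpos[OF elim] Q0pos elim in auto)
    qed
    with lim show ?thesis by (auto intro: Lim_transform_eventually)
  qed
  have E1: "(\<lambda>D. I_nl n l q D) \<sim>[at_top] T1" by (rule asymp_equivI'[OF R1])
  have E2: "T1 \<sim>[at_top] T2" by (rule asymp_equivI'[OF R2])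
  show ?thesis unfolding T1_def[symmetric] T2_def[symmetric]
    using E1 asymp_equiv_trans[OF E1 E2] by blast
qed

end
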